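(* Let $n \ge 2$ be an integer and $p_0 = \frac{n\log n - (n-1)\log(n-1)}{\log n}$. Then for every $n\times n$ matrix $A=(a_{ij})$ with nonnegative entries and all row sums equal to $1$, $$\mathrm{per}\left(\left(a_{ij}^{1/p_0}\right)_{i,j}\right) \le 1.$$
   Context: $\mathrm{per}(B)=\sum_{\sigma\in S_n}\prod_{i=1}^n b_{i\sigma(i)}$ is the permanent of an $n\times n$ matrix $B$. *)

theory Defs
  imports "HOL-Analysis.Analysis" "HOL-Combinatorics.Permutations"
begin

definition per :: "nat \<Rightarrow> (nat \<Rightarrow> nat \<Rightarrow> real) \<Rightarrow> real" where
  "per n B = (\<Sum>\<sigma> | \<sigma> permutes {0..<n}. \<Prod>i<n. B i (\<sigma> i))"

end

theory Submission
  imports Defs "HOL-Real_Asymp.Real_Asymp"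
begin

definition FF :: "real \<Rightarrow> real \<Rightarrow> real" where
  "FF c t = c * (t * ln t) - (1 - t) * ln (1 - t)"
definition FF1 :: "real \<Rightarrow> real \<Rightarrow> real" where
  "FF1 c t = c * (ln t + 1) + ln (1 - t) + 1"
definition FF2 :: "real \<Rightarrow> real \<Rightarrow> real" where
  "FF2 c t = c / t - 1 / (1 - t)"

lemma FF_0 [simp]: "FF c 0 = 0" and FF_1 [simp]: "FF c 1 = 0"
  by (simp_all add: FF_def)

lemma FF_deriv: "0 < t \<Longrightarrow> t < 1 \<Longrightarrow> (FF c has_real_derivative FF1 c t) (at t)"
  unfolding FF_def FF1_def
  apply (rule derivative_eq_intros refl | simp)+
  done

lemma FF1_deriv: "0 < t \<Longrightarrow> t < 1 \<Longrightarrow> (FF1 c has_real_derivative FF2 c t) (at t)"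
  unfolding FF2_def FF1_def
  apply (rule derivative_eq_intros refl | simp)+
  done

lemma FF2_nonneg: "0 < c \<Longrightarrow> 0 < t \<Longrightarrow> t \<le> c / (1 + c) \<Longrightarrow> 0 \<le> FF2 c t"
proof -
  assume a: "0 < c" "0 < t" "t \<le> c / (1 + c)"
  then have "t * (1 + c) \<le> c" by (simp add: field_simps)
  have "c / (1 + c) < 1" using a by simp
  then have t1: "t < 1" using a by linarith
  have "t \<le> c * (1 - t)" using \<open>t * (1 + c) \<le> c\<close> by (simp add: algebra_simps)
  then have "1 / (1 - t) \<le> c / t" using a t1 by (simp add: field_simps)
  then show ?thesis by (simp add: FF2_def)
qed

lemma FF2_nonpos: "0 < c \<Longrightarrow> c / (1 + c) \<le> t \<Longrightarrow> t < 1 \<Longrightarrow> FF2 c t \<le> 0"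
proof -
  assume a: "0 < c" "c / (1 + c) \<le> t" "t < 1"
  then have "c \<le> t * (1 + c)" by (simp add: field_simps)
  then have "c * (1 - t) \<le> t" by (simp add: algebra_simps)
  moreover have "0 < c / (1 + c)" using a by simp
  then have "0 < t" using a by linarith
  ultimately have "c / t \<le> 1 / (1 - t)" using a by (simp add: field_simps)
  then show ?thesis by (simp add: FF2_def)
qed

lemma FF1_mono:
  assumes "0 < c" "0 < a" "a \<le> b" "b \<le> c / (1 + c)"
  shows "FF1 c a \<le> FF1 c b"
proof (rule DERIV_nonneg_imp_nondecreasing[OF assms(3)])
  fix z assume z: "a \<le> z" "z \<le> b"
  have "c / (1 + c) < 1" using assms by simp
  then have "z < 1" "0 < z" using z assms by linarith+
  then show "\<exists>y. (FF1 c has_real_derivative y) (at z) \<and> 0 \<le> y"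
    using z assms by (intro exI[of _ "FF2 c z"]) (auto intro!: FF1_deriv FF2_nonneg)
qed

lemma FF1_antimono:
  assumes "0 < c" "c / (1 + c) \<le> a" "a \<le> b" "b < 1"
  shows "FF1 c b \<le> FF1 c a"
proof (rule DERIV_nonpos_imp_nonincreasing[OF assms(3)])
  fix z assume z: "a \<le> z" "z \<le> b"
  have "0 < c / (1 + c)" using assms by simp
  then have "z < 1" "0 < z" using z assms by linarith+
  then show "\<exists>y. (FF1 c has_real_derivative y) (at z) \<and> y \<le> 0"
    using z assms by (intro exI[of _ "FF2 c z"]) (auto intro!: FF1_deriv FF2_nonpos)
qed

lemma FF_tangent:
  assumes c: "0 < c" and y: "0 < y" "y \<le> c/(1+c)" and t: "0 \<le> t" "t \<le> c/(1+c)"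
  shows "FF c y + FF1 c y * (t - y) \<le> FF c t"
proof -
  have s1: "c/(1+c) < 1" using c by simp
  consider "t = 0" | "0 < t" "t \<le> y" | "y \<le> t" using t by linarith
  then show ?thesis
  proof cases
    case 1
    have "(\<lambda>z. (1+c)*z + ln(1-z)) 0 \<le> (\<lambda>z. (1+c)*z + ln(1-z)) y"
    proof (rule DERIV_nonneg_imp_nondecreasing[of 0 y])
      show "0 \<le> y" using y by simp
      fix z assume z: "0 \<le> z" "z \<le> y"
      then have z1: "z < 1" using y s1 by linarith
      have "z*(1+c) \<le> y*(1+c)" using z c by (intro mult_right_mono) auto
      also have "y*(1+c) \<le> c" using y c by (simp add: field_simps)
      finally have "z*(1+c) \<le> c" .
      then have "1 \<le> (1 + c) * (1 - z)" by (simp add: algebra_simps)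
      then have "1 / (1 - z) \<le> 1 + c" using z1 by (simp add: field_simps)
      moreover have "((\<lambda>z. (1+c)*z + ln(1-z)) has_real_derivative ((1+c) - 1/(1-z))) (at z)"
        apply (rule derivative_eq_intros refl | use z1 in simp)+
        done
      ultimately show "\<exists>d. ((\<lambda>z. (1+c)*z + ln(1-z)) has_real_derivative d) (at z) \<and> 0 \<le> d"
        by (intro exI[of _ "(1+c) - 1/(1-z)"]) simp
    qed
    then have "0 \<le> (1 + c) * y + ln (1 - y)" by simp
    moreover have "FF c y + FF1 c y * (0 - y) = - ln (1 - y) - (1 + c) * y"
      by (simp add: FF_def FF1_def algebra_simps)
    ultimately show ?thesis using 1 by simp
  next
    case 2
    define \<psi> where "\<psi> z = FF c z - FF1 c y * z" for z
    have "\<psi> y \<le> \<psi> t"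
    proof (rule DERIV_nonpos_imp_nonincreasing[of t y \<psi>])
      show "t \<le> y" using 2 by simp
      fix z assume z: "t \<le> z" "z \<le> y"
      then have z1: "z < 1" "0 < z" using y s1 2 by linarith+
      have "(\<psi> has_real_derivative (FF1 c z - FF1 c y)) (at z)"
        unfolding \<psi>_def using DERIV_diff[OF FF_deriv[OF z1(2) z1(1)] DERIV_cmult_Id[of "FF1 c y"]]
        by simp
      moreover have "FF1 c z \<le> FF1 c y" using FF1_mono[of c z y] c z z1 y by simp
      ultimately show "\<exists>d. (\<psi> has_real_derivative d) (at z) \<and> d \<le> 0"
        by (intro exI[of _ "FF1 c z - FF1 c y"]) simp
    qed
    then show ?thesis by (simp add: \<psi>_def algebra_simps)
  next
    case 3
    define \<psi> where "\<psi> z = FF c z - FF1 c y * z" for z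
    have "\<psi> y \<le> \<psi> t"
    proof (rule DERIV_nonneg_imp_nondecreasing[of y t \<psi>])
      show "y \<le> t" using 3 by simp
      fix z assume z: "y \<le> z" "z \<le> t"
      then have z1: "z < 1" "0 < z" using y s1 t by linarith+
      have "(\<psi> has_real_derivative (FF1 c z - FF1 c y)) (at z)"
        unfolding \<psi>_def using DERIV_diff[OF FF_deriv[OF z1(2) z1(1)] DERIV_cmult_Id[of "FF1 c y"]]
        by simp
      moreover have "FF1 c y \<le> FF1 c z" using FF1_mono[of c y z] c z z1 y t by simp
      ultimately show "\<exists>d. (\<psi> has_real_derivative d) (at z) \<and> 0 \<le> d"
        by (intro exI[of _ "FF1 c z - FF1 c y"]) simp
    qed
    then show ?thesis by (simp add: \<psi>_def algebra_simps)
  qed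
qed

lemma FF_concave: "0 < c \<Longrightarrow> concave_on {c/(1+c)..<1} (FF c)"
proof (rule f''_le0_imp_concave[where f' = "FF1 c" and f'' = "FF2 c"])
  assume c: "0 < c"
  have "0 < c/(1+c)" using c by simp
  then show "\<And>x. x \<in> {c / (1 + c)..<1} \<Longrightarrow> (FF c has_real_derivative FF1 c x) (at x)"
    "\<And>x. x \<in> {c / (1 + c)..<1} \<Longrightarrow> (FF1 c has_real_derivative FF2 c x) (at x)"
    "\<And>x. x \<in> {c / (1 + c)..<1} \<Longrightarrow> FF2 c x \<le> 0"
    by (auto intro!: FF_deriv FF1_deriv FF2_nonpos c)
qed (simp add: convex_real_interval)

lemma FF_chord:
  assumes c: "0 < c" and x: "c/(1+c) \<le> x" "x \<le> B" and B: "B < 1" "c/(1+c) < B"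
  shows "FF c (c/(1+c)) + (x - c/(1+c)) * ((FF c B - FF c (c/(1+c))) / (B - c/(1+c))) \<le> FF c x"
proof -
  define s where "s = c/(1+c)"
  define l where "l = (x - s) / (B - s)"
  have l: "0 \<le> l" "l \<le> 1" using x B by (auto simp: l_def s_def field_simps)
  have Bs: "B - s > 0" using B by (simp add: s_def)
  have "l * (B - s) = x - s" using Bs by (simp add: l_def)
  then have xe: "x = (1 - l) *\<^sub>R s + l *\<^sub>R B" by (simp add: algebra_simps)
  have "convex_on {s..<1} (\<lambda>x. - FF c x)" using FF_concave[OF c] by (simp add: concave_on_def s_def)
  from convex_onD[OF this l, of s B] have
    "- FF c x \<le> (1 - l) * (- FF c s) + l * (- FF c B)" using x B xe by (simp add: s_def)
  then have "FF c s + l * (FF c B - FF c s) \<le> FF c x" by (simp add: algebra_simps)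
  then show ?thesis by (simp add: l_def s_def[symmetric] mult.commute)
qed

definition cc :: "nat \<Rightarrow> real" where
  "cc n = (real n - 1) * (ln (real n) - ln (real n - 1)) / ln (real n)"

lemma cc_pos: "n \<ge> 2 \<Longrightarrow> 0 < cc n"
proof -
  assume n: "n \<ge> 2"
  then have "ln (real n - 1) < ln (real n)" by simp
  moreover have "0 < ln (real n)" using n by simp
  moreover have "0 < real n - 1" using n by simp
  ultimately show ?thesis unfolding cc_def by (intro divide_pos_pos mult_pos_pos) auto
qed

lemma cc_FF: "n \<ge> 2 \<Longrightarrow> FF (cc n) (1 / real n) = 0"
proof -
  assume n: "n \<ge> 2"
  define N where "N = real n"
  have N: "N \<ge> 2" using n by (simp add: N_def)
  have l1: "ln (1 / N) = - ln N" using N by (simp add: ln_div)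
  have "1 - 1 / N = (N - 1) / N" using N by (simp add: field_simps)
  then have l2: "ln (1 - 1 / N) = ln (N - 1) - ln N" using N by (simp add: ln_div)
  have lnN: "ln N > 0" using N by simp
  have "FF (cc n) (1 / N) = - (cc n * ln N) / N - (1 - 1/N) * (ln (N - 1) - ln N)"
    unfolding FF_def l1 l2 by simp
  also have "cc n * ln N = (N - 1) * (ln N - ln (N - 1))"
    using lnN by (simp add: cc_def N_def)
  finally show ?thesis using N by (simp add: N_def[symmetric] field_simps)
qed

lemma ln_le_aux: "(x::real) \<ge> 3 \<Longrightarrow> ln x \<le> x - 2 + 1 / x"
proof -
  assume x: "x \<ge> 3"
  have "exp (1/3::real) \<ge> 4/3" using exp_ge_add_one_self[of "1/3::real"] by simp
  then have "exp (1/3::real) ^ 4 \<ge> (4/3) ^ 4" by (intro power_mono) auto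
  moreover have "exp (1/3::real) ^ 4 = exp (4/3)" by (simp add: exp_of_nat_mult[symmetric])
  moreover have "(4/3::real)^4 = 256/81" by (simp add: power_divide)
  ultimately have "exp (4/3::real) \<ge> 3" by simp
  then have l3: "ln 3 \<le> (4/3::real)" by (metis exp_gt_zero ln_exp ln_le_cancel_iff zero_less_numeral)
  have "(\<lambda>x. x - 2 + 1 / x - ln x) 3 \<le> (\<lambda>x. x - 2 + 1 / x - ln x) x"
  proof (rule DERIV_nonneg_imp_nondecreasing[OF x])
    fix z :: real assume z: "3 \<le> z" "z \<le> x"
    have "((\<lambda>x. x - 2 + 1 / x - ln x) has_real_derivative (1 - 1 / z^2 - 1 / z)) (at z)"
      using z by (auto intro!: derivative_eq_intros simp: power2_eq_square field_simps)
    moreover have "1 / z^2 + 1 / z \<le> 1"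
    proof -
      have "(3::real)^2 \<le> z^2" using z by (intro power_mono) auto
      then have "1 / z^2 \<le> 1 / 9" using z by (simp add: field_simps)
      moreover have "1 / z \<le> 1 / 3" using z by (simp add: field_simps)
      ultimately show ?thesis by simp
    qed
    ultimately show "\<exists>y. ((\<lambda>x. x - 2 + 1 / x - ln x) has_real_derivative y) (at z) \<and> 0 \<le> y"
      by (intro exI[of _ "1 - 1 / z^2 - 1 / z"]) simp
  qed
  then show ?thesis using l3 by simp
qed

lemma cc_ge: "n \<ge> 2 \<Longrightarrow> 1 / real n \<le> cc n / (1 + cc n)"
proof -
  assume n: "n \<ge> 2"
  define N where "N = real n"
  have N: "N \<ge> 2" using n by (simp add: N_def)
  have cp: "0 < cc n" using cc_pos[OF n] .
  have key: "1 / (N - 1) \<le> cc n"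
  proof (cases "n = 2")
    case True
    then show ?thesis by (simp add: cc_def N_def)
  next
    case False
    then have N3: "N \<ge> 3" using n by (simp add: N_def)
    have "ln (1 - 1 / N) \<le> - 1 / N" using ln_le_minus_one[of "1 - 1/N"] N by (simp add: field_simps)
    moreover have "1 - 1 / N = (N - 1) / N" using N by (simp add: field_simps)
    ultimately have a: "1 / N \<le> ln N - ln (N - 1)" using N by (simp add: ln_div)
    have lnN: "0 < ln N" using N by simp
    have b: "ln N \<le> (N - 1)^2 / N" using ln_le_aux[OF N3] N3 by (simp add: power2_eq_square field_simps)
    have "1 / (N - 1) \<le> (N - 1) / (N * ln N)"
      using b lnN N by (simp add: field_simps power2_eq_square)
    also have "\<dots> = (N - 1) * (1 / N) / ln N" by simp
    also have "\<dots> \<le> (N - 1) * (ln N - ln (N - 1)) / ln N"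
      using a lnN N by (intro divide_right_mono mult_left_mono) auto
    finally show ?thesis by (simp add: cc_def N_def)
  qed
  then have "1 \<le> cc n * (N - 1)" using N by (simp add: field_simps)
  then show ?thesis using cp N by (simp add: N_def[symmetric] field_simps)
qed

lemma cc_lt: "n \<ge> 3 \<Longrightarrow> cc n < real n - 1"
proof -
  assume n: "n \<ge> 3"
  define N where "N = real n"
  have N: "N \<ge> 3" using n by (simp add: N_def)
  have "ln (N / (N - 1)) \<le> N / (N - 1) - 1" using N by (intro ln_le_minus_one) simp
  moreover have "N / (N - 1) - 1 = 1 / (N - 1)" using N by (simp add: field_simps)
  ultimately have a: "ln N - ln (N - 1) \<le> 1 / (N - 1)" using N by (simp add: ln_div)
  have "ln (1 / N) \<le> 1 / N - 1" using N by (intro ln_le_minus_one) simp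
  then have lnN: "1 - 1 / N \<le> ln N" using N by (simp add: ln_div)
  have "1 - 1 / N \<ge> 2 / 3" using N by (simp add: field_simps)
  then have lnN2: "ln N \<ge> 2/3" using lnN by simp
  have "cc n = (N - 1) * (ln N - ln (N - 1)) / ln N" by (simp add: cc_def N_def)
  also have "\<dots> \<le> (N - 1) * (1 / (N - 1)) / ln N"
    using a N lnN2 by (intro divide_right_mono mult_left_mono) auto
  also have "\<dots> = 1 / ln N" using N by simp
  also have "\<dots> \<le> 3 / 2" using lnN2 by (simp add: field_simps)
  also have "\<dots> < N - 1" using N by simp
  finally show ?thesis by (simp add: N_def)
qed

lemma Phi_nonneg:
  fixes N c B :: real
  assumes N: "N \<ge> 3" and c: "0 < c" "c < N - 1" "1/N \<le> c/(1+c)" and F0: "FF c (1/N) = 0"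
    and B: "1/N \<le> B" "B \<le> 1"
  shows "0 \<le> FF c B + (N - 1) * FF c ((1 - B)/(N - 1))"
proof -
  define \<Phi> where "\<Phi> B = FF c B + (N-1) * FF c ((1-B)/(N-1))" for B
  define \<Phi>1 where "\<Phi>1 B = FF1 c B - FF1 c ((1-B)/(N-1))" for B
  define \<Phi>2 where "\<Phi>2 B = FF2 c B + FF2 c ((1-B)/(N-1)) / (N-1)" for B
  define s where "s = c*(N-2)/(N-1-c)"
  have yr: "0 < (1-z)/(N-1)" "(1-z)/(N-1) < 1" if "0 < z" "z < 1" for z
    using that N by (auto simp: field_simps)
  have dy: "((\<lambda>B. (1-B)/(N-1)) has_real_derivative (-1/(N-1))) (at z)" for z
  proof -
    have "((\<lambda>B. (1-B) * (1/(N-1))) has_real_derivative (-1 * (1/(N-1)))) (at z)"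
      by (intro DERIV_cmult_right) (rule derivative_eq_intros refl | simp)+
    then show ?thesis by simp
  qed
  have dPhi: "(\<Phi> has_real_derivative \<Phi>1 z) (at z)" if z: "0 < z" "z < 1" for z
  proof -
    have "((\<lambda>B. FF c ((1-B)/(N-1))) has_real_derivative FF1 c ((1-z)/(N-1)) * (-1/(N-1))) (at z)"
      by (rule DERIV_chain2[OF FF_deriv[OF yr[OF z]] dy])
    from DERIV_add[OF FF_deriv[OF z] DERIV_cmult[OF this, of "N-1"]]
    show ?thesis using N unfolding \<Phi>_def \<Phi>1_def by simp
  qed
  have dPhi1: "(\<Phi>1 has_real_derivative \<Phi>2 z) (at z)" if z: "0 < z" "z < 1" for z
  proof -
    have "((\<lambda>B. FF1 c ((1-B)/(N-1))) has_real_derivative FF2 c ((1-z)/(N-1)) * (-1/(N-1))) (at z)"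
      by (rule DERIV_chain2[OF FF1_deriv[OF yr[OF z]] dy])
    from DERIV_diff[OF FF1_deriv[OF z] this]
    show ?thesis using N unfolding \<Phi>1_def \<Phi>2_def by simp
  qed
  have sign: "\<Phi>2 z * (z*(1-z)*(N-2+z)) = c*(N-2) - (N-1-c)*z" if z: "0 < z" "z < 1" for z
  proof -
    have h: "N - 2 + z > 0" "N - 1 > 0" "1 - z > 0" using N z by auto
    have e1: "c / ((1-z)/(N-1)) / (N-1) = c / (1 - z)"
    proof -
      have "c / ((1-z)/(N-1)) / (N-1) = (c * (N-1)) / ((1-z) * (N-1))" by simp
      also have "\<dots> = c / (1 - z)" using h by (intro mult_divide_mult_cancel_right) simp
      finally show ?thesis .
    qed
    have e2: "1 / (1 - (1-z)/(N-1)) / (N-1) = 1 / (N - 2 + z)"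
    proof -
      have "1 - (1-z)/(N-1) = (N-2+z)/(N-1)" using h by (simp add: field_simps)
      then have "1 / (1 - (1-z)/(N-1)) / (N-1) = (1 * (N-1)) / ((N-2+z) * (N-1))" by simp
      also have "\<dots> = 1 / (N - 2 + z)" using h by (intro mult_divide_mult_cancel_right) simp
      finally show ?thesis .
    qed
    have "\<Phi>2 z = c/z - 1/(1-z) + (c / ((1-z)/(N-1)) / (N-1) - 1 / (1 - (1-z)/(N-1)) / (N-1))"
      unfolding \<Phi>2_def FF2_def by (simp add: diff_divide_distrib)
    also have "\<dots> = c/z - 1/(1-z) + c/(1-z) - 1/(N-2+z)" unfolding e1 e2 by simp
    finally have "\<Phi>2 z = c/z - 1/(1-z) + c/(1-z) - 1/(N-2+z)" .
    then have "\<Phi>2 z * (z*(1-z)*(N-2+z)) = (c/z)*(z*(1-z)*(N-2+z)) - (1/(1-z))*(z*(1-z)*(N-2+z))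
        + (c/(1-z))*(z*(1-z)*(N-2+z)) - (1/(N-2+z))*(z*(1-z)*(N-2+z))"
      by (simp add: ring_distribs)
    also have "(c/z)*(z*(1-z)*(N-2+z)) = c*(1-z)*(N-2+z)" using z by simp
    also have "(1/(1-z))*(z*(1-z)*(N-2+z)) = z*(N-2+z)" using h by simp
    also have "(c/(1-z))*(z*(1-z)*(N-2+z)) = c*z*(N-2+z)" using h by simp
    also have "(1/(N-2+z))*(z*(1-z)*(N-2+z)) = z*(1-z)" using h by simp
    also have "c*(1-z)*(N-2+z) - z*(N-2+z) + c*z*(N-2+z) - z*(1-z) = c*(N-2) - (N-1-c)*z"
      by (simp add: algebra_simps)
    finally show ?thesis .
  qed
  have pos: "z*(1-z)*(N-2+z) > 0" if "0 < z" "z < 1" for z using that N by simp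
  have Nc: "N - 1 - c > 0" using c by simp
  have P2pos: "0 \<le> \<Phi>2 z" if z: "0 < z" "z < 1" "z \<le> s" for z
  proof -
    have "(N-1-c)*z \<le> c*(N-2)" using z(3) Nc by (simp add: s_def field_simps)
    then have "0 \<le> \<Phi>2 z * (z*(1-z)*(N-2+z))" using sign[OF z(1,2)] by simp
    moreover have "\<Phi>2 z = (\<Phi>2 z * (z*(1-z)*(N-2+z))) / (z*(1-z)*(N-2+z))"
      using pos[OF z(1,2)] by (intro nonzero_mult_div_cancel_right[symmetric]) (metis less_irrefl)
    ultimately show ?thesis using pos[OF z(1,2)] by (metis divide_nonneg_pos)
  qed
  have P2neg: "\<Phi>2 z \<le> 0" if z: "0 < z" "z < 1" "s \<le> z" for z
  proof -
    have "c*(N-2) \<le> (N-1-c)*z" using z(3) Nc by (simp add: s_def field_simps)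
    then have "\<Phi>2 z * (z*(1-z)*(N-2+z)) \<le> 0" using sign[OF z(1,2)] by simp
    moreover have "\<Phi>2 z = (\<Phi>2 z * (z*(1-z)*(N-2+z))) / (z*(1-z)*(N-2+z))"
      using pos[OF z(1,2)] by (intro nonzero_mult_div_cancel_right[symmetric]) (metis less_irrefl)
    ultimately show ?thesis using pos[OF z(1,2)] by (metis divide_nonpos_pos)
  qed
  have c1: "1 \<le> c * (N - 1)" using c N by (simp add: field_simps)
  have s_ge: "1/N \<le> s"
  proof -
    have "(N - 1 - c) \<le> c * (N - 2) * N"
    proof -
      have "c * (N - 2) * N - (N - 1 - c) = (c * (N - 1) - 1) * (N - 1)" by (simp add: algebra_simps)
      moreover have "0 \<le> (c * (N - 1) - 1) * (N - 1)" using c1 N by simp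
      ultimately show ?thesis by simp
    qed
    then show ?thesis using Nc N by (simp add: s_def field_simps)
  qed
  have N0: "0 < 1/N" "1/N < 1" using N by auto
  have y1N: "(1 - 1/N)/(N-1) = 1/N" using N by (simp add: field_simps)
  have Phi0: "\<Phi> (1/N) = 0" unfolding \<Phi>_def y1N F0 by simp
  have Phi10: "\<Phi>1 (1/N) = 0" unfolding \<Phi>1_def y1N by simp
  have conv: "0 \<le> \<Phi> b" if b: "1/N \<le> b" "b \<le> s" "b < 1" for b
  proof -
    have "\<Phi> (1/N) \<le> \<Phi> b"
    proof (rule DERIV_nonneg_imp_nondecreasing[OF b(1)])
      fix z assume z: "1/N \<le> z" "z \<le> b"
      have "\<Phi>1 (1/N) \<le> \<Phi>1 z"
      proof (rule DERIV_nonneg_imp_nondecreasing[OF z(1)])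
        fix w assume w: "1/N \<le> w" "w \<le> z"
        then have w': "0 < w" "w < 1" "w \<le> s" using N0 z b by linarith+
        show "\<exists>y. (\<Phi>1 has_real_derivative y) (at w) \<and> 0 \<le> y"
          by (intro exI[of _ "\<Phi>2 w"] conjI dPhi1 P2pos w')
      qed
      moreover have "0 < z" "z < 1" using z b N0 by linarith+
      ultimately show "\<exists>y. (\<Phi> has_real_derivative y) (at z) \<and> 0 \<le> y"
        using Phi10 by (intro exI[of _ "\<Phi>1 z"] conjI dPhi) auto
    qed
    then show ?thesis using Phi0 by simp
  qed
  have "0 \<le> \<Phi> B"
  proof (cases "B = 1")
    case True
    then show ?thesis by (simp add: \<Phi>_def)
  next
    case False
    then have B1: "B < 1" using B by simp
    show ?thesis
    proof (cases "B \<le> s")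
      case True
      then show ?thesis using conv B B1 by simp
    next
      case False
      then have sB: "s < B" by simp
      have s1: "s < 1" using sB B1 by simp
      have Ps: "0 \<le> \<Phi> s" using conv[OF s_ge order.refl s1] .
      show ?thesis
      proof (cases "0 \<le> \<Phi>1 B")
        case True
        have "\<Phi> s \<le> \<Phi> B"
        proof (rule DERIV_nonneg_imp_nondecreasing[of s B \<Phi>])
          show "s \<le> B" using sB by simp
          fix z assume z: "s \<le> z" "z \<le> B"
          have zz: "0 < z" "z < 1" using z s_ge N0 B1 by linarith+
          have "\<Phi>1 B \<le> \<Phi>1 z"
          proof (rule DERIV_nonpos_imp_nonincreasing[OF z(2)])
            fix w assume w: "z \<le> w" "w \<le> B"
            then have w': "0 < w" "w < 1" "s \<le> w" using zz B1 z by linarith+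
            show "\<exists>y. (\<Phi>1 has_real_derivative y) (at w) \<and> y \<le> 0"
              by (intro exI[of _ "\<Phi>2 w"] conjI dPhi1 P2neg w')
          qed
          then show "\<exists>y. (\<Phi> has_real_derivative y) (at z) \<and> 0 \<le> y"
            using True by (intro exI[of _ "\<Phi>1 z"] conjI dPhi zz) auto
        qed
        then show ?thesis using Ps by simp
      next
        case False
        have le: "\<Phi> t \<le> \<Phi> B" if t: "t \<in> {B<..<1}" for t
        proof (rule DERIV_nonpos_imp_nonincreasing[of B t \<Phi>])
          show "B \<le> t" using t by simp
          fix z assume z: "B \<le> z" "z \<le> t"
          have zz: "0 < z" "z < 1" using z t s_ge sB N0 by (simp_all, linarith+)
          have "\<Phi>1 z \<le> \<Phi>1 B"
          proof (rule DERIV_nonpos_imp_nonincreasing[OF z(1)])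
            fix w assume w: "B \<le> w" "w \<le> z"
            then have w': "0 < w" "w < 1" "s \<le> w" using zz sB z s_ge N0 by linarith+
            show "\<exists>y. (\<Phi>1 has_real_derivative y) (at w) \<and> y \<le> 0"
              by (intro exI[of _ "\<Phi>2 w"] conjI dPhi1 P2neg w')
          qed
          then show "\<exists>y. (\<Phi> has_real_derivative y) (at z) \<and> y \<le> 0"
            using False by (intro exI[of _ "\<Phi>1 z"] conjI dPhi zz) auto
        qed
        have k: "N - 1 > 0" using N by simp
        have lim: "(\<Phi> \<longlongrightarrow> 0) (at_left 1)"
          unfolding \<Phi>_def FF_def using k by real_asymp
        have ev: "\<forall>\<^sub>F t in at_left 1. \<Phi> t \<le> \<Phi> B"
          using eventually_at_left_real[OF B1] by (rule eventually_mono) (use le in auto)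
        show ?thesis by (rule tendsto_upperbound[OF lim ev trivial_limit_at_left_real])
      qed
    qed
  qed
  then show ?thesis by (simp add: \<Phi>_def)
qed


lemma Phi_nonneg_n:
  assumes n: "n \<ge> 2" and B: "1 / real n \<le> B" "B \<le> 1"
  shows "0 \<le> FF (cc n) B + (real n - 1) * FF (cc n) ((1 - B)/(real n - 1))"
proof (cases "n = 2")
  case True
  then have "cc n = 1" by (simp add: cc_def)
  then show ?thesis using True by (simp add: FF_def algebra_simps)
next
  case False
  then have n3: "n \<ge> 3" using n by simp
  have c1: "1 / real n \<le> cc n / (1 + cc n)" using cc_ge[OF n] .
  show ?thesis
    by (rule Phi_nonneg[OF _ cc_pos[OF n] cc_lt[OF n3] c1 cc_FF[OF n] B]) (use n3 in simp)
qed

lemma D_lemma: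
  assumes n: "n \<ge> 2" and I: "finite I" "card I \<le> n" and th: "\<forall>i\<in>I. 0 \<le> \<theta> i"
    and sum1: "sum \<theta> I = 1"
  shows "0 \<le> (\<Sum>i\<in>I. FF (cc n) (\<theta> i))"
proof -
  define c where "c = cc n"
  define N where "N = real n"
  define s where "s = c / (1 + c)"
  have cpos: "0 < c" using cc_pos[OF n] by (simp add: c_def)
  have Ns: "1 / N \<le> s" using cc_ge[OF n] by (simp add: c_def N_def s_def)
  have N2: "N \<ge> 2" using n by (simp add: N_def)
  have spos: "0 < s" using cpos by (simp add: s_def)
  have s1: "s < 1" using cpos by (simp add: s_def)
  have Ine: "I \<noteq> {}" using sum1 by auto
  have "Max (\<theta> ` I) \<in> \<theta> ` I" using I Ine by (intro Max_in) auto
  then obtain j0 where j0': "j0 \<in> I" "\<theta> j0 = Max (\<theta> ` I)" by (metis imageE)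
  have j0: "j0 \<in> I" "\<forall>i\<in>I. \<theta> i \<le> \<theta> j0"
    using j0' I by auto
  define M where "M = \<theta> j0"
  have leM: "\<theta> i \<le> M" if "i \<in> I" for i
    using that j0 by (simp add: M_def)
  have th1: "\<theta> i \<le> 1" if "i \<in> I" for i
    using member_le_sum[of i I \<theta>] that th I sum1 by simp
  have M0: "0 \<le> M" unfolding M_def using th j0(1) by blast
  have "1 \<le> N * M"
  proof -
    have "sum \<theta> I \<le> sum (\<lambda>i. M) I" by (rule sum_mono) (use leM in auto)
    also have "\<dots> = real (card I) * M" by simp
    also have "\<dots> \<le> N * M" using I(2) M0 by (intro mult_right_mono) (auto simp: N_def)
    finally show ?thesis using sum1 by simp
  qed
  then have MN: "1 / N \<le> M" using N2 by (simp add: field_simps)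
  define I' where "I' = I - {j0}"
  have fI': "finite I'" using I by (simp add: I'_def)
  have sumI: "sum g I = g j0 + sum g I'" for g :: "'a \<Rightarrow> real"
    unfolding I'_def using I j0 by (simp add: sum.remove)
  have cI': "card I' + 1 \<le> n" using I j0 by (simp add: I'_def card_Diff_singleton)
      (metis One_nat_def Suc_pred card_gt_0_iff empty_iff)
  show ?thesis
  proof (cases "M = 1")
    case True
    have "sum \<theta> I' = 0" using sumI[of \<theta>] sum1 True by (simp add: M_def)
    then have "\<forall>i\<in>I'. \<theta> i = 0" using fI' th by (subst (asm) sum_nonneg_eq_0_iff) (auto simp: I'_def)
    then have "(\<Sum>i\<in>I'. FF (cc n) (\<theta> i)) = 0" by simp
    then show ?thesis using sumI[of "\<lambda>i. FF (cc n) (\<theta> i)"] True by (simp add: M_def)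
  next
    case False
    then have M1: "M < 1" using th1 j0 by (simp add: M_def less_le)
    define L where "L = {i\<in>I'. s < \<theta> i}"
    define S where "S = {i\<in>I'. \<not> s < \<theta> i}"
    have fL: "finite L" "finite S" using fI' by (auto simp: L_def S_def)
    have LS: "I' = L \<union> S" "L \<inter> S = {}" by (auto simp: L_def S_def)
    have sumI': "sum g I' = sum g L + sum g S" for g :: "'a \<Rightarrow> real"
      unfolding LS(1) by (rule sum.union_disjoint[OF fL LS(2)])
    have cLS: "card L + card S = card I'" unfolding LS(1) using card_Un_disjoint[OF fL LS(2)] by simp
    define l where "l = real (card L)"
    define sg where "sg = real (card S)"
    define B where "B = M + (\<Sum>i\<in>L. \<theta> i - s)"
    have tot: "M + sum \<theta> L + sum \<theta> S = 1" using sum1 sumI[of \<theta>] sumI'[of \<theta>] by (simp add: M_def)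
    have sumLs: "(\<Sum>i\<in>L. \<theta> i - s) = sum \<theta> L - l * s" by (simp add: sum_subtractf l_def)
    have oneB: "1 - B = l * s + sum \<theta> S" using tot sumLs by (simp add: B_def)
    have BM: "M \<le> B" unfolding B_def by (rule add_increasing2[OF sum_nonneg order.refl]) (auto simp: L_def less_imp_le)
    have B1: "B < 1"
    proof (cases "L = {}")
      case True then show ?thesis using M1 by (simp add: B_def)
    next
      case False
      then have "l \<ge> 1" using fL by (simp add: l_def Suc_le_eq card_gt_0_iff)
      then have "l * s > 0" using spos by simp
      moreover have "sum \<theta> S \<ge> 0" using th by (intro sum_nonneg) (auto simp: S_def I'_def)
      ultimately show ?thesis using oneB by simp
    qed
    have step1: "FF c B + l * FF c s \<le> FF c M + (\<Sum>i\<in>L. FF c (\<theta> i))"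
    proof (cases "L = {}")
      case True then show ?thesis by (simp add: B_def l_def)
    next
      case False
      then obtain i0 where "i0 \<in> L" by auto
      then have "s < M" using leM[of i0] by (auto simp: L_def I'_def)
      then have sB: "s < B" using BM by simp
      define k where "k = (FF c B - FF c s) / (B - s)"
      have chord: "FF c s + (x - s) * k \<le> FF c x" if "s \<le> x" "x \<le> B" for x
        using FF_chord[OF cpos, of x B] that B1 sB by (simp add: k_def s_def)
      have "(\<Sum>i\<in>L. FF c s + (\<theta> i - s) * k) \<le> (\<Sum>i\<in>L. FF c (\<theta> i))"
      proof (rule sum_mono)
        fix i assume i: "i \<in> L"
        then have "\<theta> i \<le> M" using leM by (auto simp: L_def I'_def)
        then show "FF c s + (\<theta> i - s) * k \<le> FF c (\<theta> i)"
          using i BM by (intro chord) (auto simp: L_def)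
      qed
      moreover have "(\<Sum>i\<in>L. FF c s + (\<theta> i - s) * k) = l * FF c s + (\<Sum>i\<in>L. \<theta> i - s) * k"
        by (simp add: sum.distrib sum_distrib_right l_def)
      moreover have "FF c s + (M - s) * k \<le> FF c M" using chord \<open>s < M\<close> BM by simp
      moreover have "(B - s) * k = FF c B - FF c s" using sB by (simp add: k_def)
      ultimately show ?thesis unfolding B_def by (simp add: algebra_simps)
    qed
    define y where "y = (1 - B) / (N - 1)"
    have y0: "0 < y" using B1 N2 by (simp add: y_def)
    have yN: "y \<le> 1 / N"
    proof -
      have BN: "1/N \<le> B" using BM MN by simp
      have "1 - B \<le> 1 - 1/N" using BN by simp
      also have "1 - 1/N = (1/N) * (N - 1)" using N2 by (simp add: field_simps)
      finally have "1 - B \<le> (1/N) * (N - 1)" .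
      then show ?thesis using N2 by (simp add: y_def pos_divide_le_eq)
    qed
    have ys: "y \<le> s" using yN Ns by simp
    define d where "d = FF1 c y"
    have tang: "FF c y + d * (t - y) \<le> FF c t" if "0 \<le> t" "t \<le> s" for t
      using FF_tangent[OF cpos y0, of t] ys that by (simp add: d_def s_def)
    have t_s: "l * (FF c y + d * (s - y)) \<le> l * FF c s"
      using tang[of s] spos by (intro mult_left_mono) (auto simp: l_def)
    have t_S: "(\<Sum>i\<in>S. FF c y + d * (\<theta> i - y)) \<le> (\<Sum>i\<in>S. FF c (\<theta> i))"
      by (rule sum_mono, rule tang) (use th in \<open>auto simp: S_def I'_def\<close>)
    have t_S': "(\<Sum>i\<in>S. FF c y + d * (\<theta> i - y)) = sg * FF c y + d * (sum \<theta> S - sg * y)"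
      by (simp add: sum.distrib sum_distrib_left sum_subtractf sg_def algebra_simps)
    define r where "r = N - 1 - l - sg"
    have r0: "0 \<le> r"
    proof -
      have "real (card L + card S) + 1 \<le> N" using cI' cLS by (simp add: N_def)
      then show ?thesis by (simp add: r_def l_def sg_def)
    qed
    have t_0: "r * (FF c y + d * (0 - y)) \<le> 0"
      using tang[of 0] spos r0 by (simp add: mult_nonneg_nonpos)
    have step2: "(N - 1) * FF c y \<le> l * FF c s + (\<Sum>i\<in>S. FF c (\<theta> i))"
    proof -
      have "(N - 1) * FF c y = l * (FF c y + d * (s - y)) + (sg * FF c y + d * (sum \<theta> S - sg * y))
          + r * (FF c y + d * (0 - y))"
      proof -
        have "(N - 1) * y = 1 - B" using N2 by (simp add: y_def)
        then have "d * (l * s + sum \<theta> S - (l + sg + r) * y) = 0" using oneB by (simp add: r_def)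
        then show ?thesis by (simp add: r_def algebra_simps)
      qed
      then show ?thesis using t_s t_S t_S' t_0 by linarith
    qed
    have step3: "0 \<le> FF c B + (N - 1) * FF c y"
      using Phi_nonneg_n[OF n, of B] BM MN B1 by (simp add: c_def N_def y_def)
    have "(\<Sum>i\<in>I. FF c (\<theta> i)) = FF c M + (\<Sum>i\<in>L. FF c (\<theta> i)) + (\<Sum>i\<in>S. FF c (\<theta> i))"
      using sumI[of "\<lambda>i. FF c (\<theta> i)"] sumI'[of "\<lambda>i. FF c (\<theta> i)"] by (simp add: M_def)
    then show ?thesis using step1 step2 step3 by (simp add: c_def)
  qed
qed


lemma gibbs2:
  fixes c t :: real
  assumes "0 < c" "c < 1" "0 < t" "t \<le> 1"
  shows "t * ln c + (1 - t) * ln (1 - c) \<le> t * ln t + (1 - t) * ln (1 - t)"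
proof (cases "t = 1")
  case True
  have "ln c \<le> 0" using assms by simp
  then show ?thesis using True by simp
next
  case False
  then have t1: "t < 1" using assms by simp
  have a: "ln (c / t) \<le> c / t - 1" using assms by (intro ln_le_minus_one) simp
  have b: "ln ((1 - c) / (1 - t)) \<le> (1 - c) / (1 - t) - 1" using assms t1 by (intro ln_le_minus_one) simp
  have a': "t * (ln c - ln t) \<le> c - t"
  proof -
    have "t * (ln c - ln t) = t * ln (c / t)" using assms by (simp add: ln_div)
    also have "\<dots> \<le> t * (c / t - 1)" using a assms by (intro mult_left_mono) auto
    also have "\<dots> = c - t" using assms by (simp add: field_simps)
    finally show ?thesis .
  qed
  have b': "(1 - t) * (ln (1 - c) - ln (1 - t)) \<le> t - c"
  proof -
    have "(1 - t) * (ln (1 - c) - ln (1 - t)) = (1 - t) * ln ((1 - c) / (1 - t))" using assms t1 by (simp add: ln_div)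
    also have "\<dots> \<le> (1 - t) * ((1 - c) / (1 - t) - 1)" using b t1 by (intro mult_left_mono) auto
    also have "\<dots> = t - c" using t1 by (simp add: field_simps)
    finally show ?thesis .
  qed
  from a' b' show ?thesis by (simp add: algebra_simps)
qed

lemma c_lemma:
  fixes c :: "'a \<Rightarrow> real"
  assumes n: "n \<ge> 2" and I: "finite I" "card I \<le> n" and cr: "\<forall>i\<in>I. 0 \<le> c i \<and> c i \<le> 1"
  shows "(\<Sum>i\<in>I. (c i * (\<Prod>k\<in>I-{i}. 1 - c k)) powr (1 / (1 + cc n))) \<le> 1"
proof -
  define m where "m = 1 + cc n"
  define x where "x = 1 / m"
  have m1: "1 < m" using cc_pos[OF n] by (simp add: m_def)
  have x0: "0 < x" using m1 by (simp add: x_def)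
  define T where "T i = c i * (\<Prod>k\<in>I-{i}. 1 - c k)" for i
  have T0: "0 \<le> T i" if "i \<in> I" for i
    using cr that unfolding T_def by (intro mult_nonneg_nonneg prod_nonneg) auto
  have T1: "T i \<le> 1" if "i \<in> I" for i
  proof -
    have "(\<Prod>k\<in>I-{i}. 1 - c k) \<le> 1" using cr by (intro prod_le_1) auto
    moreover have "0 \<le> (\<Prod>k\<in>I-{i}. 1 - c k)" using cr by (intro prod_nonneg) auto
    ultimately show ?thesis using cr that unfolding T_def by (simp add: mult_le_one)
  qed
  define g where "g = (\<Sum>i\<in>I. T i powr x)"
  have goal: "g \<le> 1"
  proof (cases "\<exists>j\<in>I. c j = 1")
    case True
    then obtain j where j: "j \<in> I" "c j = 1" by auto
    have "T i = 0" if "i \<in> I - {j}" for i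
    proof -
      have "(\<Prod>k\<in>I-{i}. 1 - c k) = 0" using that j I by (intro prod_zero) auto
      then show ?thesis by (simp add: T_def)
    qed
    then have "g = T j powr x + (\<Sum>i\<in>I-{j}. T i powr x)" and "(\<Sum>i\<in>I-{j}. T i powr x) = 0"
      using I j by (simp_all add: g_def sum.remove)
    then have "g = T j powr x" by simp
    also have "\<dots> \<le> 1" using T0[OF j(1)] T1[OF j(1)] x0 by (intro powr_le1) auto
    finally show ?thesis .
  next
    case False
    then have c1: "c k < 1" if "k \<in> I" for k using cr that by force
    show ?thesis
    proof (cases "g = 0")
      case True then show ?thesis by simp
    next
      case False
      have g0: "0 < g" using False T0 unfolding g_def by (metis (no_types, lifting) less_eq_real_def powr_ge_zero sum_nonneg)
      define \<theta> where "\<theta> i = T i powr x / g" for i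
      have th0: "\<forall>i\<in>I. 0 \<le> \<theta> i" using g0 by (simp add: \<theta>_def)
      have ths: "sum \<theta> I = 1" using g0 by (simp add: \<theta>_def g_def sum_divide_distrib[symmetric])
      have th1: "\<theta> i \<le> 1" if "i \<in> I" for i using member_le_sum[of i I \<theta>] th0 ths I that by simp
      have D: "0 \<le> (\<Sum>i\<in>I. FF (cc n) (\<theta> i))" by (rule D_lemma[OF n I th0 ths])
      define Lg where "Lg k = ln (1 - c k)" for k
      have Tpos: "0 < T i" if "i \<in> I" "\<theta> i \<noteq> 0" for i
        using that T0[OF that(1)] by (auto simp: \<theta>_def less_le)
      have E1: "\<theta> i * ln (T i) = \<theta> i * (m * ln g + m * ln (\<theta> i))" if "i \<in> I" for i
      proof (cases "\<theta> i = 0")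
        case False
        have tp: "0 < T i" using Tpos[OF that False] .
        have thp: "0 < \<theta> i" using False th0 that by (simp add: less_le)
        have "T i powr x = g * \<theta> i" using g0 by (simp add: \<theta>_def)
        then have "ln (T i powr x) = ln g + ln (\<theta> i)" using g0 thp by (simp add: ln_mult)
        then have "x * ln (T i) = ln g + ln (\<theta> i)" by (simp add: ln_powr)
        then have "ln (T i) = m * ln g + m * ln (\<theta> i)" using m1 by (simp add: x_def field_simps)
        then show ?thesis by simp
      qed simp
      have E2: "\<theta> i * ln (T i) = \<theta> i * (ln (c i) + (\<Sum>k\<in>I-{i}. Lg k))" if "i \<in> I" for i
      proof (cases "\<theta> i = 0")
        case False
        have tp: "0 < T i" using Tpos[OF that False] .
        then have ci: "0 < c i" using cr that T0 unfolding T_def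
          by (metis less_eq_real_def mult_zero_left)
        have pp: "0 < (\<Prod>k\<in>I-{i}. 1 - c k)" by (intro prod_pos) (use c1 in auto)
        have "ln (T i) = ln (c i) + ln (\<Prod>k\<in>I-{i}. 1 - c k)"
          using ci pp unfolding T_def by (simp add: ln_mult)
        also have "ln (\<Prod>k\<in>I-{i}. 1 - c k) = (\<Sum>k\<in>I-{i}. Lg k)"
          unfolding Lg_def by (rule ln_prod; use I c1 in force)
        finally show ?thesis by simp
      qed simp
      have E3: "(\<Sum>i\<in>I. \<theta> i * (\<Sum>k\<in>I-{i}. Lg k)) = (\<Sum>k\<in>I. (1 - \<theta> k) * Lg k)"
      proof -
        have "(\<Sum>i\<in>I. \<theta> i * (\<Sum>k\<in>I-{i}. Lg k)) = (\<Sum>i\<in>I. \<theta> i * (sum Lg I - Lg i))"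
          using I by (intro sum.cong refl) (simp add: sum_diff1)
        also have "\<dots> = sum \<theta> I * sum Lg I - (\<Sum>i\<in>I. \<theta> i * Lg i)"
          by (simp add: right_diff_distrib sum_subtractf sum_distrib_right)
        also have "\<dots> = (\<Sum>k\<in>I. (1 - \<theta> k) * Lg k)"
          using ths by (simp add: left_diff_distrib sum_subtractf)
        finally show ?thesis .
      qed
      have E4: "\<theta> i * ln (c i) + (1 - \<theta> i) * Lg i \<le> \<theta> i * ln (\<theta> i) + (1 - \<theta> i) * ln (1 - \<theta> i)"
        if "i \<in> I" for i
      proof (cases "\<theta> i = 0")
        case True
        have "Lg i \<le> 0" using cr c1 that by (simp add: Lg_def)
        then show ?thesis using True by simp
      next
        case False
        have tp: "0 < T i" using Tpos[OF that False] .
        then have ci: "0 < c i" using cr that T0 unfolding T_def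
          by (metis less_eq_real_def mult_zero_left)
        show ?thesis unfolding Lg_def
          using gibbs2[OF ci c1[OF that]] False th0 th1 that by (simp add: less_le)
      qed
      have "m * ln g + m * (\<Sum>i\<in>I. \<theta> i * ln (\<theta> i)) = (\<Sum>i\<in>I. \<theta> i * ln (T i))"
      proof -
        have "(\<Sum>i\<in>I. \<theta> i * ln (T i)) = (\<Sum>i\<in>I. \<theta> i * (m * ln g + m * ln (\<theta> i)))"
          using E1 by (rule sum.cong[OF refl])
        also have "\<dots> = sum \<theta> I * (m * ln g) + m * (\<Sum>i\<in>I. \<theta> i * ln (\<theta> i))"
          by (simp add: distrib_left sum.distrib sum_distrib_left sum_distrib_right algebra_simps)
        finally show ?thesis using ths by simp
      qed
      also have "\<dots> = (\<Sum>i\<in>I. \<theta> i * ln (c i)) + (\<Sum>i\<in>I. \<theta> i * (\<Sum>k\<in>I-{i}. Lg k))"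
        using E2 by (simp add: sum.distrib[symmetric] distrib_left cong: sum.cong)
      also have "\<dots> = (\<Sum>i\<in>I. \<theta> i * ln (c i) + (1 - \<theta> i) * Lg i)"
        unfolding E3 by (simp add: sum.distrib)
      also have "\<dots> \<le> (\<Sum>i\<in>I. \<theta> i * ln (\<theta> i) + (1 - \<theta> i) * ln (1 - \<theta> i))"
        using E4 by (rule sum_mono)
      finally have "m * ln g \<le> (\<Sum>i\<in>I. \<theta> i * ln (\<theta> i) + (1 - \<theta> i) * ln (1 - \<theta> i)) - m * (\<Sum>i\<in>I. \<theta> i * ln (\<theta> i))"
        by simp
      also have "\<dots> = - (\<Sum>i\<in>I. FF (cc n) (\<theta> i))"
        by (simp add: FF_def m_def sum.distrib sum_subtractf sum_distrib_left algebra_simps)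
      also have "\<dots> \<le> 0" using D by simp
      finally have "ln g \<le> 0" using m1 by (simp add: mult_le_0_iff)
      then show ?thesis using g0 by simp
    qed
  qed
  then show ?thesis by (simp add: g_def T_def x_def m_def)
qed


definition injs :: "nat set \<Rightarrow> nat set \<Rightarrow> (nat \<Rightarrow> nat) set" where
  "injs R C = {f. f \<in> R \<rightarrow>\<^sub>E C \<and> inj_on f R}"

definition pm :: "nat set \<Rightarrow> nat set \<Rightarrow> (nat \<Rightarrow> nat \<Rightarrow> real) \<Rightarrow> real" where
  "pm R C B = (\<Sum>f\<in>injs R C. \<Prod>i\<in>R. B i (f i))"

lemma finite_injs: "finite R \<Longrightarrow> finite C \<Longrightarrow> finite (injs R C)"
  unfolding injs_def by (rule finite_subset[OF _ finite_PiE[of R "\<lambda>_. C"]]) auto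

lemma injs_image:
  assumes "finite R" "finite C" "card R = card C" "f \<in> injs R C"
  shows "f ` R = C"
proof -
  have "f ` R \<subseteq> C" "inj_on f R" using assms(4) by (auto simp: injs_def)
  then show ?thesis using assms card_image[of f R] by (intro card_subset_eq) auto
qed

lemma pm_empty: "pm {} {} B = 1"
  by (simp add: pm_def injs_def PiE_empty_domain)

lemma pm_laplace:
  assumes R: "finite R" and C: "finite C" and card: "card R = card C" and j: "j \<in> C"
  shows "pm R C B = (\<Sum>i\<in>R. B i j * pm (R - {i}) (C - {j}) B)"
proof -
  define P where "P f = (\<Prod>k\<in>R. B k (f k))" for f
  have fin: "finite (injs R C)" using finite_injs[OF R C] .
  have one: "(\<Sum>i\<in>R. if f i = j then P f else 0) = P f" if f: "f \<in> injs R C" for f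
  proof -
    have "j \<in> f ` R" using injs_image[OF R C card f] j by simp
    then obtain i0 where i0: "i0 \<in> R" "f i0 = j" by auto
    have inj: "inj_on f R" using f by (simp add: injs_def)
    have "{i\<in>R. f i = j} = {i0}" using i0 inj by (auto dest: inj_onD)
    moreover have "(\<Sum>i\<in>R. if f i = j then P f else 0) = sum (\<lambda>i. P f) {i\<in>R. f i = j}"
      using R by (simp only: sum.inter_filter)
    ultimately show ?thesis by simp
  qed
  have "pm R C B = (\<Sum>f\<in>injs R C. \<Sum>i\<in>R. if f i = j then P f else 0)"
    unfolding pm_def P_def[symmetric] using one by simp
  also have "\<dots> = (\<Sum>i\<in>R. \<Sum>f\<in>injs R C. if f i = j then P f else 0)" by (rule sum.swap)
  also have "\<dots> = (\<Sum>i\<in>R. \<Sum>f\<in>{f\<in>injs R C. f i = j}. P f)"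
    using fin by (simp add: sum.inter_filter)
  also have "\<dots> = (\<Sum>i\<in>R. B i j * pm (R - {i}) (C - {j}) B)"
  proof (rule sum.cong[OF refl])
    fix i assume i: "i \<in> R"
    have "(\<Sum>f\<in>{f\<in>injs R C. f i = j}. P f) = (\<Sum>g\<in>injs (R - {i}) (C - {j}). B i j * (\<Prod>k\<in>R-{i}. B k (g k)))"
    proof (rule sum.reindex_bij_witness[where i = "\<lambda>g. g(i := j)" and j = "\<lambda>f. f(i := undefined)"])
      fix f assume f: "f \<in> {f\<in>injs R C. f i = j}"
      then show "(f(i := undefined))(i := j) = f" by auto
      have fR: "f \<in> R \<rightarrow>\<^sub>E C" "inj_on f R" "f i = j" using f by (auto simp: injs_def)
      have "f x \<noteq> j" if "x \<in> R - {i}" for x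
        using fR(2,3) that i by (metis DiffE inj_onD singletonI)
      moreover have "inj_on (f(i := undefined)) (R - {i})"
        using fR(2) by (auto simp: inj_on_def)
      ultimately show "f(i := undefined) \<in> injs (R - {i}) (C - {j})"
        using fR(1) by (auto simp: injs_def PiE_def extensional_def)
      show "B i j * (\<Prod>k\<in>R - {i}. B k ((f(i := undefined)) k)) = P f"
        unfolding P_def using fR(3) R i by (simp add: prod.remove)
    next
      fix g assume g: "g \<in> injs (R - {i}) (C - {j})"
      have gR: "g \<in> (R - {i}) \<rightarrow>\<^sub>E (C - {j})" "inj_on g (R - {i})" using g by (auto simp: injs_def)
      have gi: "g i = undefined" using gR(1) by (auto simp: PiE_def extensional_def)
      then show "(g(i := j))(i := undefined) = g" by auto
      have "g(i := j) \<in> R \<rightarrow>\<^sub>E C" using gR(1) i j by (auto simp: PiE_def extensional_def Pi_def)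
      moreover have "inj_on (g(i := j)) R"
      proof -
        have "R = insert i (R - {i})" using i by auto
        moreover have "inj_on (g(i := j)) (insert i (R - {i}))"
          unfolding inj_on_insert using gR by (auto simp: inj_on_def PiE_def Pi_def)
        ultimately show ?thesis by simp
      qed
      ultimately show "g(i := j) \<in> {f \<in> injs R C. f i = j}" by (simp add: injs_def)
    qed
    also have "\<dots> = B i j * pm (R - {i}) (C - {j}) B"
      by (simp add: pm_def sum_distrib_left)
    finally show "(\<Sum>f\<in>{f\<in>injs R C. f i = j}. P f) = B i j * pm (R - {i}) (C - {j}) B" .
  qed
  finally show ?thesis .
qed


lemma hom_lemma:
  fixes d r :: "nat \<Rightarrow> real"
  assumes n: "n \<ge> 2" and R: "finite R" "card R \<le> n" and dr: "\<forall>k\<in>R. 0 \<le> d k \<and> d k \<le> r k"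
  shows "(\<Sum>i\<in>R. d i powr (1 / (1 + cc n)) * (\<Prod>k\<in>R-{i}. (r k - d k) powr (1 / (1 + cc n))))
         \<le> (\<Prod>k\<in>R. r k powr (1 / (1 + cc n)))"
proof -
  define x where "x = 1 / (1 + cc n)"
  have x0: "0 < x" using cc_pos[OF n] by (simp add: x_def)
  have "(\<Sum>i\<in>R. d i powr x * (\<Prod>k\<in>R-{i}. (r k - d k) powr x)) \<le> (\<Prod>k\<in>R. r k powr x)"
  proof (cases "\<exists>k\<in>R. r k = 0")
    case True
    then obtain k where k: "k \<in> R" "r k = 0" by auto
    then have dk: "d k = 0" using dr by force
    have P0: "(\<Prod>k\<in>R. r k powr x) = 0" using k R by (intro prod_zero) auto
    have zt: "d i powr x * (\<Prod>k\<in>R-{i}. (r k - d k) powr x) = 0" if i: "i \<in> R" for i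
    proof (cases "i = k")
      case True then show ?thesis using dk by simp
    next
      case False
      have "(\<Prod>k\<in>R-{i}. (r k - d k) powr x) = 0"
        apply (rule prod_zero)
        using R apply simp
        apply (rule bexI[of _ k])
        using k dk False by auto
      then show ?thesis by simp
    qed
    then have "(\<Sum>i\<in>R. d i powr x * (\<Prod>k\<in>R-{i}. (r k - d k) powr x)) = 0"
      by (intro sum.neutral) blast
    then show ?thesis using P0 by simp
  next
    case False
    then have rp: "0 < r k" if "k \<in> R" for k using dr that by force
    define c where "c k = d k / r k" for k
    have cr: "\<forall>k\<in>R. 0 \<le> c k \<and> c k \<le> 1" using dr rp by (auto simp: c_def field_simps)
    have dk: "d k = r k * c k" if "k \<in> R" for k using rp[OF that] by (simp add: c_def)
    have rdk: "r k - d k = r k * (1 - c k)" if "k \<in> R" for k using rp[OF that] by (simp add: c_def field_simps)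
    have trm: "d i powr x * (\<Prod>k\<in>R-{i}. (r k - d k) powr x)
        = (\<Prod>k\<in>R. r k powr x) * (c i * (\<Prod>k\<in>R-{i}. 1 - c k)) powr x" if i: "i \<in> R" for i
    proof -
      have "(\<Prod>k\<in>R-{i}. (r k - d k) powr x) = (\<Prod>k\<in>R-{i}. r k powr x * (1 - c k) powr x)"
        using rdk by (intro prod.cong refl) (simp add: powr_mult)
      also have "\<dots> = (\<Prod>k\<in>R-{i}. r k powr x) * (\<Prod>k\<in>R-{i}. (1 - c k) powr x)"
        by (rule prod.distrib)
      finally have e1: "(\<Prod>k\<in>R-{i}. (r k - d k) powr x) = (\<Prod>k\<in>R-{i}. r k powr x) * (\<Prod>k\<in>R-{i}. 1 - c k) powr x"
        by (simp add: prod_powr_distrib)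
      have e2: "d i powr x = r i powr x * c i powr x" using dk[OF i] by (simp add: powr_mult)
      have e3: "(\<Prod>k\<in>R. r k powr x) = r i powr x * (\<Prod>k\<in>R-{i}. r k powr x)"
        using R i by (simp add: prod.remove)
      show ?thesis unfolding e1 e2 e3 by (simp add: powr_mult)
    qed
    have "(\<Sum>i\<in>R. d i powr x * (\<Prod>k\<in>R-{i}. (r k - d k) powr x))
        = (\<Prod>k\<in>R. r k powr x) * (\<Sum>i\<in>R. (c i * (\<Prod>k\<in>R-{i}. 1 - c k)) powr x)"
      using trm by (simp add: sum_distrib_left)
    also have "\<dots> \<le> (\<Prod>k\<in>R. r k powr x) * 1"
      using c_lemma[OF n R cr] by (intro mult_left_mono) (auto simp: x_def intro!: prod_nonneg)
    finally show ?thesis by simp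
  qed
  then show ?thesis by (simp add: x_def)
qed

lemma pm_bound:
  assumes n: "n \<ge> 2"
  shows "finite R \<Longrightarrow> finite C \<Longrightarrow> card R = card C \<Longrightarrow> card R \<le> n \<Longrightarrow> (\<forall>i\<in>R. \<forall>j\<in>C. 0 \<le> a i j)
    \<Longrightarrow> pm R C (\<lambda>i j. a i j powr (1 / (1 + cc n))) \<le> (\<Prod>i\<in>R. (\<Sum>j\<in>C. a i j) powr (1 / (1 + cc n)))"
proof (induction "card R" arbitrary: R C)
  case 0
  then have "R = {}" "C = {}" by auto
  then show ?case by (simp add: pm_empty)
next
  case (Suc k)
  define x where "x = 1 / (1 + cc n)"
  have x0: "0 < x" using cc_pos[OF n] by (simp add: x_def)
  have "C \<noteq> {}" using Suc by auto
  then obtain j where j: "j \<in> C" by auto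
  have "pm R C (\<lambda>i j. a i j powr x) = (\<Sum>i\<in>R. a i j powr x * pm (R - {i}) (C - {j}) (\<lambda>i j. a i j powr x))"
    by (rule pm_laplace[OF Suc(3,4,5) j])
  also have "\<dots> \<le> (\<Sum>i\<in>R. a i j powr x * (\<Prod>k\<in>R-{i}. (\<Sum>l\<in>C-{j}. a k l) powr x))"
  proof (rule sum_mono)
    fix i assume i: "i \<in> R"
    have "pm (R - {i}) (C - {j}) (\<lambda>i j. a i j powr x) \<le> (\<Prod>k\<in>R-{i}. (\<Sum>l\<in>C-{j}. a k l) powr x)"
      unfolding x_def
    proof (rule Suc(1))
      show "k = card (R - {i})" using Suc(2) i Suc(3) by simp
      show "finite (R - {i})" "finite (C - {j})" using Suc(3,4) by auto
      show "card (R - {i}) = card (C - {j})" using Suc(3,4,5) i j by simp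
      show "card (R - {i}) \<le> n" using Suc(3,6) i by (simp add: card_Diff_singleton)
      show "\<forall>i\<in>R - {i}. \<forall>j\<in>C - {j}. 0 \<le> a i j" using Suc(7) by auto
    qed
    then show "a i j powr x * pm (R - {i}) (C - {j}) (\<lambda>i j. a i j powr x)
        \<le> a i j powr x * (\<Prod>k\<in>R-{i}. (\<Sum>l\<in>C-{j}. a k l) powr x)"
      by (intro mult_left_mono) auto
  qed
  also have "\<dots> = (\<Sum>i\<in>R. a i j powr x * (\<Prod>k\<in>R-{i}. ((\<Sum>l\<in>C. a k l) - a k j) powr x))"
    using Suc(4) j by (simp add: sum_diff1)
  also have "\<dots> \<le> (\<Prod>k\<in>R. (\<Sum>l\<in>C. a k l) powr x)"
    unfolding x_def
  proof (rule hom_lemma[OF n Suc(3,6)])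
    show "\<forall>k\<in>R. 0 \<le> a k j \<and> a k j \<le> (\<Sum>l\<in>C. a k l)"
      using Suc(7) j Suc(4) by (auto intro: member_le_sum)
  qed
  finally show ?case by (simp add: x_def)
qed

lemma per_pm: "per n B = pm {..<n} {..<n} B"
proof -
  define S where "S = {..<n}"
  have "per n B = (\<Sum>\<sigma> | \<sigma> permutes S. \<Prod>i\<in>S. B i (\<sigma> i))"
    by (simp add: per_def S_def atLeast0LessThan)
  also have "\<dots> = (\<Sum>f\<in>injs S S. \<Prod>i\<in>S. B i (f i))"
  proof (rule sum.reindex_bij_witness[where i = "\<lambda>f x. if x \<in> S then f x else x" and j = "\<lambda>\<sigma>. restrict \<sigma> S"])
    fix \<sigma> assume s: "\<sigma> \<in> {\<sigma>. \<sigma> permutes S}"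
    then have p: "\<sigma> permutes S" by simp
    show "(\<lambda>x. if x \<in> S then restrict \<sigma> S x else x) = \<sigma>"
      using p by (auto simp: permutes_not_in)
    show "restrict \<sigma> S \<in> injs S S"
      using p by (auto simp: injs_def permutes_in_image inj_on_def permutes_inj_on[THEN inj_onD])
    show "(\<Prod>i\<in>S. B i (restrict \<sigma> S i)) = (\<Prod>i\<in>S. B i (\<sigma> i))" by simp
  next
    fix f assume f: "f \<in> injs S S"
    have fS: "f \<in> S \<rightarrow>\<^sub>E S" "inj_on f S" using f by (auto simp: injs_def)
    show "restrict (\<lambda>x. if x \<in> S then f x else x) S = f"
      using fS(1) by (auto simp: restrict_def PiE_def extensional_def)
    have img: "f ` S = S" using injs_image[OF _ _ refl f] by (simp add: S_def)
    have "bij_betw (\<lambda>x. if x \<in> S then f x else x) S S"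
    proof -
      have "bij_betw f S S" using fS(2) img by (simp add: bij_betw_def)
      then show ?thesis by (rule bij_betw_cong[THEN iffD1, rotated]) auto
    qed
    then have "(\<lambda>x. if x \<in> S then f x else x) permutes S" by (rule bij_imp_permutes) auto
    then show "(\<lambda>x. if x \<in> S then f x else x) \<in> {\<sigma>. \<sigma> permutes S}" by simp
  qed
  finally show ?thesis by (simp add: pm_def S_def)
qed

theorem proposition1p4:
  fixes n :: nat and A :: "nat \<Rightarrow> nat \<Rightarrow> real" and p0 :: real
  assumes "n \<ge> 2"
    and "p0 = (real n * ln (real n) - (real n - 1) * ln (real n - 1)) / ln (real n)"
    and "\<And>i j. i < n \<Longrightarrow> j < n \<Longrightarrow> A i j \<ge> 0"
    and "\<And>i. i < n \<Longrightarrow> (\<Sum>j<n. A i j) = 1"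
  shows "per n (\<lambda>i j. A i j powr (1 / p0)) \<le> 1"
proof -
  have lnpos: "0 < ln (real n)" using assms(1) by simp
  have p: "p0 = 1 + cc n"
    unfolding assms(2) cc_def using lnpos by (simp add: field_simps)
  have "per n (\<lambda>i j. A i j powr (1 / p0)) = pm {..<n} {..<n} (\<lambda>i j. A i j powr (1 / (1 + cc n)))"
    by (simp add: per_pm p)
  also have "\<dots> \<le> (\<Prod>i\<in>{..<n}. (\<Sum>j\<in>{..<n}. A i j) powr (1 / (1 + cc n)))"
    by (rule pm_bound[OF assms(1)]) (use assms(3) in auto)
  also have "\<dots> = 1" using assms(4) by simp
  finally show ?thesis .
qed

end
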